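(* Let $G$ be a $\gamma_t$-critical graph of order $n$ with $\gamma_t(G)=n-\Delta(G)$ and $\delta(G)\ge 2$. Let $v$ be a vertex with $d(v)=\Delta(G)$, let $S=V(G)\setminus N[v]$, and let $H_1,\dots,H_t$ be the connected components of $G[S]$. Then: (1) each $H_i$ is isomorphic to $P_2$ or $P_3$; (2) if some $H_i$ is isomorphic to $P_3$, then $G[S]$ itself is a path $P_3=u_1u_2u_3$ (so $t=1$); moreover $N(u_2)\cap N(v)=\emptyset$, and $N(v)$ is the disjoint union of the two nonempty sets $N(u_1)\setminus\{u_2\}$ and $N(u_3)\setminus\{u_2\}$; (3) if every $H_i$ is isomorphic to $P_2$, say $H_i=u_iw_i$, then $N(u)\cap N(v)\neq\emptyset$ for every $u\in S$, and $N(v)$ is the disjoint union of the sets $N(u_1)\setminus\{w_1\},\,N(w_1)\setminus\{u_1\},\dots,N(u_t)\setminus\{w_t\},\,N(w_t)\setminus\{u_t\}$.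
   Context: All graphs are finite and simple. $N(x)$ is the neighborhood of $x$, $N[x]=N(x)\cup\{x\}$, $d(x)=|N(x)|$, $G[X]$ the subgraph induced by $X$, $P_k$ the path on $k$ vertices. A set $S\subseteq V(G)$ is a total dominating set if every vertex of $G$ is adjacent to some vertex of $S$; $\gamma_t(G)$ is the minimum size of such a set. A leaf is a vertex of degree one. A graph $G$ with no isolated vertex is $\gamma_t$-critical if for every vertex $v$ not adjacent to a leaf, $\gamma_t(G-v)<\gamma_t(G)$. *)

theory Defs
  imports Main
begin

text \<open>All notions are taken relative to the vertex set,
so that G - v is (V - {v}, E) and G[S] is (S, E).\<close>

definition graph :: "'a set \<Rightarrow> ('a \<Rightarrow> 'a \<Rightarrow> bool) \<Rightarrow> bool" where
  "graph V E \<longleftrightarrow> finite V \<and> (\<forall>x y. E x y \<longrightarrow> E y x) \<and> (\<forall>x. \<not> E x x)"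

definition nbhd :: "'a set \<Rightarrow> ('a \<Rightarrow> 'a \<Rightarrow> bool) \<Rightarrow> 'a \<Rightarrow> 'a set" where
  "nbhd V E x = {y \<in> V. E x y}"

definition cnbhd :: "'a set \<Rightarrow> ('a \<Rightarrow> 'a \<Rightarrow> bool) \<Rightarrow> 'a \<Rightarrow> 'a set" where
  "cnbhd V E x = insert x (nbhd V E x)"

definition deg :: "'a set \<Rightarrow> ('a \<Rightarrow> 'a \<Rightarrow> bool) \<Rightarrow> 'a \<Rightarrow> nat" where
  "deg V E x = card (nbhd V E x)"

definition max_deg :: "'a set \<Rightarrow> ('a \<Rightarrow> 'a \<Rightarrow> bool) \<Rightarrow> nat" where
  "max_deg V E = Max (deg V E ` V)"

definition min_deg :: "'a set \<Rightarrow> ('a \<Rightarrow> 'a \<Rightarrow> bool) \<Rightarrow> nat" where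
  "min_deg V E = Min (deg V E ` V)"

definition is_leaf :: "'a set \<Rightarrow> ('a \<Rightarrow> 'a \<Rightarrow> bool) \<Rightarrow> 'a \<Rightarrow> bool" where
  "is_leaf V E x \<longleftrightarrow> x \<in> V \<and> deg V E x = 1"

definition no_isolated :: "'a set \<Rightarrow> ('a \<Rightarrow> 'a \<Rightarrow> bool) \<Rightarrow> bool" where
  "no_isolated V E \<longleftrightarrow> (\<forall>x\<in>V. nbhd V E x \<noteq> {})"

definition total_dom :: "'a set \<Rightarrow> ('a \<Rightarrow> 'a \<Rightarrow> bool) \<Rightarrow> 'a set \<Rightarrow> bool" where
  "total_dom V E D \<longleftrightarrow> D \<subseteq> V \<and> (\<forall>x\<in>V. \<exists>y\<in>D. E x y)"

definition gamma_t :: "'a set \<Rightarrow> ('a \<Rightarrow> 'a \<Rightarrow> bool) \<Rightarrow> nat" where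
  "gamma_t V E = (LEAST k. \<exists>D. total_dom V E D \<and> card D = k)"

definition gamma_t_critical :: "'a set \<Rightarrow> ('a \<Rightarrow> 'a \<Rightarrow> bool) \<Rightarrow> bool" where
  "gamma_t_critical V E \<longleftrightarrow> no_isolated V E \<and>
     (\<forall>v\<in>V. (\<not> (\<exists>u\<in>nbhd V E v. is_leaf V E u)) \<longrightarrow>
         gamma_t (V - {v}) E < gamma_t V E)"

definition connected_set :: "('a \<Rightarrow> 'a \<Rightarrow> bool) \<Rightarrow> 'a set \<Rightarrow> bool" where
  "connected_set E C \<longleftrightarrow>
     (\<forall>x\<in>C. \<forall>y\<in>C. (\<lambda>a b. a \<in> C \<and> b \<in> C \<and> E a b)\<^sup>*\<^sup>* x y)"

definition component :: "'a set \<Rightarrow> ('a \<Rightarrow> 'a \<Rightarrow> bool) \<Rightarrow> 'a set \<Rightarrow> bool" where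
  "component S E C \<longleftrightarrow> C \<noteq> {} \<and> C \<subseteq> S \<and> connected_set E C \<and>
     (\<forall>x\<in>C. \<forall>y\<in>S - C. \<not> E x y)"

definition iso_P2 :: "('a \<Rightarrow> 'a \<Rightarrow> bool) \<Rightarrow> 'a set \<Rightarrow> bool" where
  "iso_P2 E C \<longleftrightarrow> (\<exists>a b. C = {a, b} \<and> a \<noteq> b \<and> E a b)"

definition iso_P3 :: "('a \<Rightarrow> 'a \<Rightarrow> bool) \<Rightarrow> 'a set \<Rightarrow> bool" where
  "iso_P3 E C \<longleftrightarrow> (\<exists>a b c. C = {a, b, c} \<and> a \<noteq> b \<and> b \<noteq> c \<and> a \<noteq> c \<and>
                          E a b \<and> E b c \<and> \<not> E a c)"

end

theory Submission imports Defs begin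

lemma rtranclp_sym_rev:
  assumes "\<And>a b. r a b \<Longrightarrow> r b a" "r\<^sup>*\<^sup>* x y"
  shows "r\<^sup>*\<^sup>* y x"
  using assms(2)
proof (induction rule: rtranclp.induct)
  case (rtrancl_refl a) then show ?case by simp
next
  case (rtrancl_into_rtrancl a b c)
  then show ?case using assms(1) by (meson converse_rtranclp_into_rtranclp)
qed

lemma rtranclp_exit:
  assumes "r\<^sup>*\<^sup>* x y" "x \<in> T" "y \<notin> T"
  shows "\<exists>a b. r a b \<and> a \<in> T \<and> b \<notin> T"
  using assms
proof (induction rule: rtranclp.induct)
  case (rtrancl_refl a) then show ?case by simp
next
  case (rtrancl_into_rtrancl a b c)
  show ?case
  proof (cases "b \<in> T")
    case True then show ?thesis using rtrancl_into_rtrancl by blast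
  next
    case False then show ?thesis using rtrancl_into_rtrancl by blast
  qed
qed

lemma grow_step:
  assumes "finite T" "X \<subseteq> T" "card X + 2 \<le> card T" "\<forall>x\<in>T. \<exists>y\<in>X. E x y"
    "t \<in> T" "z \<notin> T" "E z t"
  shows "\<exists>X'\<subseteq>insert z T. card X' + 2 \<le> card (insert z T) \<and> (\<forall>x\<in>insert z T. \<exists>y\<in>X'. E x y)"
proof (intro exI conjI)
  show "insert t X \<subseteq> insert z T" using assms by auto
  have "finite X" using assms(1,2) by (rule finite_subset[rotated])
  then have "card (insert t X) \<le> card X + 1" by (simp add: card_insert_if)
  moreover have "card (insert z T) = card T + 1" using assms by simp
  ultimately show "card (insert t X) + 2 \<le> card (insert z T)" using assms by linarith
  show "\<forall>x\<in>insert z T. \<exists>y\<in>insert t X. E x y" using assms(4,7) by auto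
qed

lemma grow:
  assumes fin: "finite C"
    and ext: "\<And>T. T \<subseteq> C \<Longrightarrow> T \<noteq> {} \<Longrightarrow> T \<noteq> C \<Longrightarrow> \<exists>a\<in>T. \<exists>b\<in>C-T. E b a"
  shows "T \<subseteq> C \<Longrightarrow> T \<noteq> {} \<Longrightarrow> X \<subseteq> T \<Longrightarrow> card X + 2 \<le> card T \<Longrightarrow> (\<forall>x\<in>T. \<exists>y\<in>X. E x y)
     \<Longrightarrow> \<exists>X\<subseteq>C. card X + 2 \<le> card C \<and> (\<forall>x\<in>C. \<exists>y\<in>X. E x y)"
proof (induction "card (C - T)" arbitrary: T X rule: less_induct)
  case less
  show ?case
  proof (cases "T = C")
    case True then show ?thesis using less.prems(3,4,5) by blast
  next
    case False
    then obtain a b where ab: "a \<in> T" "b \<in> C - T" "E b a" using ext[of T] less.prems(1,2) by blast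
    have "finite T" using less.prems(1) fin finite_subset by blast
    then obtain X' where X': "X' \<subseteq> insert b T" "card X' + 2 \<le> card (insert b T)"
        "\<forall>x\<in>insert b T. \<exists>y\<in>X'. E x y"
      using grow_step[of T X E a b] less.prems(3,4,5) ab \<open>finite T\<close> by blast
    have "card (C - insert b T) < card (C - T)"
    proof -
      have "C - insert b T = (C - T) - {b}" by blast
      then show ?thesis using card_Diff1_less[OF finite_Diff[OF fin] ab(2)] by simp
    qed
    moreover have "insert b T \<subseteq> C" using ab less.prems(1) by blast
    ultimately show ?thesis using less(1)[of "insert b T" X'] X' by blast
  qed
qed


locale TC =
  fixes V :: "'a set" and E :: "'a \<Rightarrow> 'a \<Rightarrow> bool" and v :: 'a and S :: "'a set"
  assumes G: "graph V E" and crit: "gamma_t_critical V E"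
    and gt: "gamma_t V E = card V - max_deg V E"
    and mindeg: "min_deg V E \<ge> 2" and vV: "v \<in> V" and vdeg: "deg V E v = max_deg V E"
    and S_def: "S = V - cnbhd V E v"
begin

lemma finV: "finite V" using G unfolding graph_def by blast
lemma symE: "E x y \<Longrightarrow> E y x" using G unfolding graph_def by blast
lemma irr: "\<not> E x x" using G unfolding graph_def by blast

lemma inS: "s \<in> S \<longleftrightarrow> s \<in> V \<and> s \<noteq> v \<and> \<not> E v s"
  unfolding S_def cnbhd_def nbhd_def by auto

lemma part: "x \<in> V \<Longrightarrow> x = v \<or> E v x \<or> x \<in> S"
  using inS by blast

lemma S_notv: "s \<in> S \<Longrightarrow> \<not> E s v"
  using inS symE by blast

lemma finS: "finite S" using finV S_def by simp

lemma deg2: "x \<in> V \<Longrightarrow> deg V E x \<ge> 2"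
proof -
  assume "x \<in> V"
  then have "Min (deg V E ` V) \<le> deg V E x" using finV by simp
  then show ?thesis using mindeg unfolding min_deg_def by linarith
qed

lemma other_nb: "x \<in> V \<Longrightarrow> \<exists>y\<in>V. E x y \<and> y \<noteq> u"
proof (rule ccontr)
  assume x: "x \<in> V" and "\<not> (\<exists>y\<in>V. E x y \<and> y \<noteq> u)"
  then have "nbhd V E x \<subseteq> {u}" unfolding nbhd_def by auto
  then have "card (nbhd V E x) \<le> card {u}" by (intro card_mono) simp_all
  then have "card (nbhd V E x) \<le> 1" by simp
  then show False using deg2[OF x] unfolding deg_def by linarith
qed

lemma no_leaf: "\<not> is_leaf V E u"
  using deg2 unfolding is_leaf_def by fastforce

lemma total_V: "total_dom V E V"
  unfolding total_dom_def using other_nb by blast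

lemma gt_le: "total_dom V E D \<Longrightarrow> gamma_t V E \<le> card D"
  unfolding gamma_t_def by (rule Least_le) blast

lemma card_S: "gamma_t V E = card S + 1"
proof -
  have nf: "finite (nbhd V E v)" using finV unfolding nbhd_def by simp
  have vn: "v \<notin> nbhd V E v" using irr unfolding nbhd_def by simp
  have c1: "card (cnbhd V E v) = deg V E v + 1"
    unfolding cnbhd_def deg_def using nf vn by simp
  have sub: "cnbhd V E v \<subseteq> V" using vV unfolding cnbhd_def nbhd_def by auto
  have "card S = card V - card (cnbhd V E v)"
    unfolding S_def using sub finV by (simp add: card_Diff_subset finite_subset)
  moreover have "card (cnbhd V E v) \<le> card V" using sub finV card_mono by blast
  ultimately show ?thesis using gt vdeg c1 by linarith
qed

lemma crit_D:
  assumes x: "x \<in> V"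
  shows "\<exists>D. D \<subseteq> V - {x} \<and> (\<forall>y\<in>V-{x}. \<exists>d\<in>D. E y d) \<and> (\<forall>d\<in>D. \<not> E x d) \<and> card D < gamma_t V E"
proof -
  have c: "\<forall>v\<in>V. (\<not> (\<exists>u\<in>nbhd V E v. is_leaf V E u)) \<longrightarrow>
         gamma_t (V - {v}) E < gamma_t V E" using crit unfolding gamma_t_critical_def by (rule conjunct2)
  have "\<not> (\<exists>u\<in>nbhd V E x. is_leaf V E u)" using no_leaf by simp
  then have lt: "gamma_t (V - {x}) E < gamma_t V E" using c x by simp
  have "total_dom (V - {x}) E (V - {x})"
    unfolding total_dom_def
  proof (intro conjI ballI)
    fix y assume "y \<in> V - {x}"
    then obtain z where "z \<in> V" "E y z" "z \<noteq> x" using other_nb[of y x] by blast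
    then show "\<exists>z\<in>V - {x}. E y z" by blast
  qed simp
  then have ex: "\<exists>k. \<exists>D. total_dom (V - {x}) E D \<and> card D = k" by blast
  obtain D where D: "total_dom (V - {x}) E D" "card D = gamma_t (V - {x}) E"
    unfolding gamma_t_def using LeastI_ex[OF ex] by blast
  have nd: "\<forall>d\<in>D. \<not> E x d"
  proof (intro ballI notI)
    fix d assume "d \<in> D" "E x d"
    then have "total_dom V E D" using D(1) unfolding total_dom_def by blast
    then show False using gt_le[of D] D lt by linarith
  qed
  have D1: "D \<subseteq> V - {x}" "\<forall>y\<in>V-{x}. \<exists>d\<in>D. E y d" using D(1) unfolding total_dom_def by auto
  have "card D < gamma_t V E" using D(2) lt by simp
  then show ?thesis using nd D1 by blast
qed

lemma claimB:
  assumes "x \<in> V" "y \<in> V" "E x y"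
  shows "\<exists>z\<in>V. E y z \<and> z \<noteq> x \<and> \<not> E x z"
proof -
  obtain D where D: "D \<subseteq> V - {x}" "\<forall>y\<in>V-{x}. \<exists>d\<in>D. E y d" "\<forall>d\<in>D. \<not> E x d"
    using crit_D[OF assms(1)] by blast
  have "y \<noteq> x" using assms irr by blast
  then show ?thesis using D assms by blast
qed

lemma F1:
  assumes X: "X \<subseteq> V" "w \<in> X" "E v w" and dom: "\<forall>s\<in>S. \<exists>y\<in>X. E s y"
  shows "card S \<le> card X"
proof -
  have "total_dom V E (insert v X)"
    unfolding total_dom_def
  proof (intro conjI ballI)
    show "insert v X \<subseteq> V" using X vV by blast
    fix x assume "x \<in> V"
    then consider "x = v" | "E v x" | "x \<in> S" using part by blast
    then show "\<exists>y\<in>insert v X. E x y"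
    proof cases
      case 1 then show ?thesis using X by blast
    next
      case 2 then show ?thesis using symE by blast
    next
      case 3 then show ?thesis using dom by blast
    qed
  qed
  then have "gamma_t V E \<le> card (insert v X)" by (rule gt_le)
  moreover have "finite X" using X finV finite_subset by blast
  then have "card (insert v X) \<le> card X + 1" by (simp add: card_insert_if)
  ultimately show ?thesis using card_S by linarith
qed

lemma F3: "y \<in> V \<Longrightarrow> y \<noteq> v \<Longrightarrow> \<exists>s\<in>S. E y s"
proof -
  assume y: "y \<in> V" "y \<noteq> v"
  obtain D where D: "D \<subseteq> V - {v}" "\<forall>y\<in>V-{v}. \<exists>d\<in>D. E y d" "\<forall>d\<in>D. \<not> E v d"
     "card D < gamma_t V E"
    using crit_D[OF vV] by blast
  have DS: "D \<subseteq> S" using D(1,3) inS by blast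
  obtain w where w: "w \<in> V" "E v w" using other_nb[OF vV] by blast
  have "total_dom V E (insert w D)"
    unfolding total_dom_def
  proof (intro conjI ballI)
    show "insert w D \<subseteq> V" using w D by blast
    fix x assume "x \<in> V"
    then show "\<exists>y\<in>insert w D. E x y" using D(2) w by (cases "x = v") auto
  qed
  then have "card S + 1 \<le> card (insert w D)" using gt_le card_S by simp
  moreover have "finite D" using DS finS finite_subset by blast
  then have "card (insert w D) \<le> card D + 1" by (simp add: card_insert_if)
  ultimately have "card S \<le> card D" using D(4) card_S by linarith
  moreover have "card D \<le> card S" using DS finS by (rule card_mono[rotated])
  ultimately have "D = S" using card_subset_eq[OF finS DS] by simp
  then show ?thesis using D(2) y by blast
qed

lemma claimA:
  assumes pq: "p \<in> S" "q \<in> S" "p \<noteq> q" and w: "w \<in> V" "E v w"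
  shows "\<exists>s\<in>S. (\<forall>y\<in>S. E s y \<longrightarrow> y = p \<or> y = q) \<and> \<not> E s w"
proof (rule ccontr)
  assume na: "\<not> ?thesis"
  let ?X = "insert w (S - {p, q})"
  have "card S \<le> card ?X"
  proof (rule F1)
    show "?X \<subseteq> V" using w inS by blast
    show "w \<in> ?X" by simp
    show "E v w" by fact
    show "\<forall>s\<in>S. \<exists>y\<in>?X. E s y" using na by blast
  qed
  moreover have "card (S - {p,q}) = card S - 2" using pq finS by (simp add: card_Diff_subset)
  moreover have "card ?X \<le> card (S - {p,q}) + 1" using finS by (simp add: card_insert_if)
  moreover have "card {p,q} \<le> card S" using pq finS by (intro card_mono) auto
  then have "card S \<ge> 2" using pq by simp
  ultimately show False by linarith
qed

lemma comp_clos: "component S E C \<Longrightarrow> x \<in> C \<Longrightarrow> y \<in> S \<Longrightarrow> E x y \<Longrightarrow> y \<in> C"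
  unfolding component_def by blast

lemma comp_clos2: "component S E C \<Longrightarrow> x \<in> C \<Longrightarrow> y \<in> S \<Longrightarrow> E y x \<Longrightarrow> y \<in> C"
  using comp_clos symE by blast

lemma comp_sub: "component S E C \<Longrightarrow> C \<subseteq> S"
  unfolding component_def by blast

lemma comp_nb: "component S E C \<Longrightarrow> x \<in> C \<Longrightarrow> \<exists>y\<in>C. E x y"
proof -
  assume c: "component S E C" "x \<in> C"
  then have "x \<in> S" using comp_sub by blast
  then obtain y where "y \<in> S" "E x y" using F3 inS by blast
  then show ?thesis using comp_clos c by blast
qed

lemma S_nb: "x \<in> S \<Longrightarrow> \<exists>y\<in>S. E x y"
  using F3 inS by blast


lemma comp_ext:
  assumes c: "component S E C" and T: "T \<subseteq> C" "T \<noteq> {}" "T \<noteq> C"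
  shows "\<exists>a\<in>T. \<exists>b\<in>C-T. E b a"
proof -
  obtain x y where xy: "x \<in> T" "y \<in> C" "y \<notin> T" using T by blast
  have "(\<lambda>a b. a \<in> C \<and> b \<in> C \<and> E a b)\<^sup>*\<^sup>* x y"
    using c xy T(1) unfolding component_def connected_set_def by blast
  then obtain a b where "a \<in> C \<and> b \<in> C \<and> E a b" "a \<in> T" "b \<notin> T"
    using rtranclp_exit[of _ x y T] xy by blast
  then show ?thesis using symE by blast
qed

lemma finC: "component S E C \<Longrightarrow> finite C"
  using comp_sub finS finite_subset by blast

lemma big_comp:
  assumes c: "component S E C" and c4: "card C \<ge> 4"
  shows False
proof -
  have fC: "finite C" using finC c .
  have ext: "\<And>T. T \<subseteq> C \<Longrightarrow> T \<noteq> {} \<Longrightarrow> T \<noteq> C \<Longrightarrow> \<exists>a\<in>T. \<exists>b\<in>C-T. E b a"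
    using comp_ext c by blast
  have "C \<noteq> {}" using c4 by auto
  then obtain a where a: "a \<in> C" by blast
  have "{a} \<noteq> C" using c4 by auto
  then obtain b where b: "b \<in> C" "b \<noteq> a" "E b a" using ext[of "{a}"] a by blast
  have c2: "card {a,b} = 2" using b by simp
  have "{a,b} \<noteq> C"
  proof
    assume eq: "{a,b} = C"
    from c2 have "card C = 2" unfolding eq .
    then show False using c4 by linarith
  qed
  moreover have "{a,b} \<subseteq> C" using a b by blast
  ultimately have "\<exists>a'\<in>{a,b}. \<exists>b'\<in>C-{a,b}. E b' a'" using ext[of "{a,b}"] by blast
  then obtain t z where tz: "t \<in> {a,b}" "z \<in> C" "z \<notin> {a,b}" "E z t" by blast
  have c3: "card {a,b,z} = 3" using b tz by auto
  have "{a,b,z} \<noteq> C"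
  proof
    assume eq: "{a,b,z} = C"
    from c3 have "card C = 3" unfolding eq .
    then show False using c4 by linarith
  qed
  moreover have "{a,b,z} \<subseteq> C" using a b tz by blast
  ultimately have "\<exists>a'\<in>{a,b,z}. \<exists>b'\<in>C-{a,b,z}. E b' a'" using ext[of "{a,b,z}"] by blast
  then obtain t' z' where tz': "t' \<in> {a,b,z}" "z' \<in> C" "z' \<notin> {a,b,z}" "E z' t'"
    by blast
  let ?T = "{a,b,z,z'}"
  have cT: "card ?T = 4" using b tz tz' by auto
  have TC: "?T \<subseteq> C" using a b tz tz' by blast
  have "\<exists>X\<subseteq>?T. card X + 2 \<le> card ?T \<and> (\<forall>x\<in>?T. \<exists>y\<in>X. E x y)"
  proof (cases "t' \<in> {a,b}")
    case True
    have "card {a,b} + 2 \<le> card ?T" using cT b by simp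
    moreover have "\<forall>x\<in>?T. \<exists>y\<in>{a,b}. E x y"
    proof
      fix x assume "x \<in> ?T"
      then consider "x = a" | "x = b" | "x = z" | "x = z'" by blast
      then show "\<exists>y\<in>{a,b}. E x y"
      proof cases
        case 1 then show ?thesis using b symE by blast
      next
        case 2 then show ?thesis using b by blast
      next
        case 3 then show ?thesis using tz by blast
      next
        case 4 then show ?thesis using tz' True by blast
      qed
    qed
    moreover have "{a,b} \<subseteq> ?T" by blast
    ultimately show ?thesis by (intro exI[of _ "{a,b}"]) simp
  next
    case False
    then have t'z: "t' = z" using tz' by blast
    have "card {t,z} \<le> 2" by (simp add: card_insert_if)
    then have "card {t,z} + 2 \<le> card ?T" using cT by simp
    moreover have "\<forall>x\<in>?T. \<exists>y\<in>{t,z}. E x y"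
    proof
      fix x assume "x \<in> ?T"
      then consider "x = a" | "x = b" | "x = z" | "x = z'" by blast
      then show "\<exists>y\<in>{t,z}. E x y"
      proof cases
        case 1 then show ?thesis using tz b symE by (cases "t = a") auto
      next
        case 2 then show ?thesis using tz b symE by (cases "t = a") auto
      next
        case 3 then show ?thesis using tz by blast
      next
        case 4 then show ?thesis using tz' t'z by blast
      qed
    qed
    moreover have "{t,z} \<subseteq> ?T" using tz by blast
    ultimately show ?thesis by (intro exI[of _ "{t,z}"]) simp
  qed
  then obtain X0 where X0: "X0 \<subseteq> ?T" "card X0 + 2 \<le> card ?T" "\<forall>x\<in>?T. \<exists>y\<in>X0. E x y" by blast
  obtain X where X: "X \<subseteq> C" "card X + 2 \<le> card C" "\<forall>x\<in>C. \<exists>y\<in>X. E x y"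
    using grow[OF fC ext TC _ X0(1) X0(2) X0(3)] by blast
  obtain w where w: "w \<in> V" "E v w" using other_nb[OF vV] by blast
  let ?Y = "insert w ((S - C) \<union> X)"
  have CS: "C \<subseteq> S" using comp_sub c .
  have "card S \<le> card ?Y"
  proof (rule F1)
    show "?Y \<subseteq> V" using w X CS inS by blast
    show "w \<in> ?Y" by simp
    show "E v w" by fact
    show "\<forall>s\<in>S. \<exists>y\<in>?Y. E s y"
    proof
      fix s assume s: "s \<in> S"
      show "\<exists>y\<in>?Y. E s y"
      proof (cases "s \<in> C")
        case True then show ?thesis using X by blast
      next
        case False
        obtain y where "y \<in> S" "E s y" using S_nb s by blast
        moreover have "y \<notin> C" using comp_clos2 c \<open>E s y\<close> s False
          by (metis comp_clos calculation(1) symE)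
        ultimately show ?thesis by blast
      qed
    qed
  qed
  moreover have "finite ((S - C) \<union> X)" using finS X fC finite_subset by blast
  then have "card ?Y \<le> card ((S - C) \<union> X) + 1" by (simp add: card_insert_if)
  moreover have "card ((S - C) \<union> X) \<le> card (S - C) + card X" by (rule card_Un_le)
  moreover have "card (S - C) = card S - card C" using CS fC by (simp add: card_Diff_subset)
  moreover have "card C \<le> card S" using CS finS card_mono by blast
  ultimately show False using X(2) by linarith
qed

lemma triangle:
  assumes c: "component S E C" and C: "C = {a,b,c}" "a \<noteq> b" "b \<noteq> c" "a \<noteq> c"
    and e: "E a b" "E b c" "E a c"
  shows False
proof -
  have CS: "C \<subseteq> S" using comp_sub c .
  have aV: "a \<in> V" "c \<in> V" using CS C inS by auto
  obtain z where z: "z \<in> V" "E c z" "z \<noteq> a" "\<not> E a z" using claimB[OF aV(1) aV(2) e(3)] by blast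
  have "z \<noteq> v" using z CS C S_notv by blast
  moreover have "z \<notin> S"
  proof
    assume "z \<in> S"
    then have "z \<in> C" using comp_clos c z C by blast
    then show False using C z e irr by blast
  qed
  ultimately have Evz: "E v z" using part z by blast
  obtain s where s: "s \<in> S" "\<forall>y\<in>S. E s y \<longrightarrow> y = a \<or> y = b" "\<not> E s z"
    using claimA[of a b z] CS C z Evz by blast
  show False
  proof (cases "s \<in> C")
    case True
    then consider "s = a" | "s = b" | "s = c" using C by blast
    then show False
    proof cases
      case 1 then show False using s e CS C by blast
    next
      case 2 then show False using s e CS C by blast
    next
      case 3 then show False using s z by blast
    qed
  next
    case False
    obtain y where "y \<in> S" "E s y" using S_nb s by blast
    then have "y = a \<or> y = b" using s by blast
    then have "y \<in> C" using C by blast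
    then have "s \<in> C" using comp_clos2 c s(1) \<open>E s y\<close> by blast
    then show False using False by blast
  qed
qed

lemma part1:
  assumes c: "component S E C"
  shows "iso_P2 E C \<or> iso_P3 E C"
proof -
  have fC: "finite C" using finC c .
  have c3: "card C \<le> 3" using big_comp c by fastforce
  have "C \<noteq> {}" using c unfolding component_def by blast
  then obtain a where a: "a \<in> C" by blast
  obtain b where b: "b \<in> C" "E a b" using comp_nb c a by blast
  have ab: "a \<noteq> b" using b irr by blast
  show ?thesis
  proof (cases "C = {a,b}")
    case True then show ?thesis unfolding iso_P2_def using ab b by blast
  next
    case False
    then obtain d where d: "d \<in> C" "d \<noteq> a" "d \<noteq> b" using a b by blast
    have "card {a,b,d} = 3" using ab d by simp
    then have Ceq: "C = {a,b,d}" using card_subset_eq[OF fC] a b d c3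
      by (metis card_mono empty_subsetI fC insert_subset le_antisym)
    have na: "\<exists>y\<in>C. E a y" "\<exists>y\<in>C. E b y" "\<exists>y\<in>C. E d y" using comp_nb c a b d by blast+
    have "E a b" using b by simp
    show ?thesis
    proof (cases "E a d")
      case True
      show ?thesis
      proof (cases "E b d")
        case True
        then show ?thesis using triangle[OF c Ceq ab _ _ \<open>E a b\<close> True \<open>E a d\<close>] d by blast
      next
        case False
        have "iso_P3 E C" unfolding iso_P3_def
          apply (rule exI[of _ b], rule exI[of _ a], rule exI[of _ d])
          using Ceq ab d \<open>E a b\<close> True False symE by blast
        then show ?thesis ..
      qed
    next
      case False
      have "E d b" using na(3) Ceq False irr symE by blast
      have "iso_P3 E C" unfolding iso_P3_def
        apply (rule exI[of _ a], rule exI[of _ b], rule exI[of _ d])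
        using Ceq ab d \<open>E a b\<close> \<open>E d b\<close> False symE by blast
      then show ?thesis ..
    qed
  qed
qed


lemma nbhd_iff: "w \<in> nbhd V E x \<longleftrightarrow> w \<in> V \<and> E x w"
  unfolding nbhd_def by simp

lemma part2:
  assumes c: "component S E C0" and C0: "C0 = {a,b,c}" "a \<noteq> b" "b \<noteq> c" "a \<noteq> c"
    and e: "E a b" "E b c" "\<not> E a c"
  shows "S = C0 \<and> nbhd V E b \<inter> nbhd V E v = {} \<and> nbhd V E a - {b} \<noteq> {} \<and> nbhd V E c - {b} \<noteq> {}
    \<and> (nbhd V E a - {b}) \<inter> (nbhd V E c - {b}) = {}
    \<and> nbhd V E v = (nbhd V E a - {b}) \<union> (nbhd V E c - {b})"
proof -
  have CS: "C0 \<subseteq> S" using comp_sub c .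
  have inC: "a \<in> C0" "b \<in> C0" "c \<in> C0" using C0 by auto
  have Na: "\<And>y. y \<in> S \<Longrightarrow> E a y \<Longrightarrow> y = b"
  proof -
    fix y assume y: "y \<in> S" "E a y"
    then have "y \<in> C0" using comp_clos c inC by blast
    then show "y = b" using C0 y irr e by blast
  qed
  have Nc: "\<And>y. y \<in> S \<Longrightarrow> E c y \<Longrightarrow> y = b"
  proof -
    fix y assume y: "y \<in> S" "E c y"
    then have "y \<in> C0" using comp_clos c inC by blast
    then show "y = b" using C0 y irr e symE by blast
  qed
  have nb: "\<And>w. w \<in> V \<Longrightarrow> E b w \<Longrightarrow> \<not> E v w"
  proof
    fix w assume w: "w \<in> V" "E b w" "E v w"
    obtain s where s: "s \<in> S" "\<forall>y\<in>S. E s y \<longrightarrow> y = a \<or> y = c" "\<not> E s w"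
      using claimA[of a c w] CS inC C0 w by blast
    show False
    proof (cases "s \<in> C0")
      case True
      then consider "s = a" | "s = b" | "s = c" using C0 by blast
      then show False
      proof cases
        case 1 then show False using s e CS inC C0 by blast
      next
        case 2 then show False using s w by blast
      next
        case 3 then show False using s e CS inC C0 symE by blast
      qed
    next
      case False
      obtain y where "y \<in> S" "E s y" using S_nb s by blast
      then have "y \<in> C0" using s inC by blast
      then have "s \<in> C0" using comp_clos2 c s(1) \<open>E s y\<close> by blast
      then show False using False by blast
    qed
  qed
  have P: "\<And>s w. s \<in> S \<Longrightarrow> s \<notin> C0 \<Longrightarrow> w \<in> V \<Longrightarrow> E v w \<Longrightarrow>
      \<exists>r. r \<in> S \<and> r \<notin> C0 \<and> E r s \<and> (\<forall>y\<in>S. E r y \<longrightarrow> y = s) \<and> \<not> E r w"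
  proof -
    fix s w assume s: "s \<in> S" "s \<notin> C0" and w: "w \<in> V" "E v w"
    have "a \<noteq> s" using s inC by blast
    then obtain r where r: "r \<in> S" "\<forall>y\<in>S. E r y \<longrightarrow> y = a \<or> y = s" "\<not> E r w"
      using claimA[of a s w] CS inC s w by blast
    have rC: "r \<notin> C0"
    proof
      assume "r \<in> C0"
      then consider "r = a" | "r = b" | "r = c" using C0 by blast
      then show False
      proof cases
        case 1 then show False using r e CS inC C0 s by blast
      next
        case 2 then show False using r e CS inC C0 s by blast
      next
        case 3 then show False using r e CS inC C0 s symE by blast
      qed
    qed
    have rs: "\<forall>y\<in>S. E r y \<longrightarrow> y = s"
    proof (intro ballI impI)
      fix y assume "y \<in> S" "E r y"
      moreover have "y \<noteq> a"
      proof
        assume "y = a"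
        then have "r \<in> C0" using comp_clos2 c inC r(1) \<open>E r y\<close> by blast
        then show False using rC by blast
      qed
      ultimately show "y = s" using r by blast
    qed
    obtain y where "y \<in> S" "E r y" using S_nb r by blast
    then have "E r s" using rs by blast
    then show "\<exists>r. r \<in> S \<and> r \<notin> C0 \<and> E r s \<and> (\<forall>y\<in>S. E r y \<longrightarrow> y = s) \<and> \<not> E r w"
      using r rC rs by blast
  qed
  obtain w0 where w0: "w0 \<in> V" "E v w0" using other_nb[OF vV] by blast
  have SC: "S = C0"
  proof (rule ccontr)
    assume "S \<noteq> C0"
    then obtain s where s: "s \<in> S" "s \<notin> C0" using CS by blast
    obtain r where r: "r \<in> S" "r \<notin> C0" "E r s" "\<forall>y\<in>S. E r y \<longrightarrow> y = s"
      using P[OF s w0] by blast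
    obtain r' where r': "r' \<in> S" "E r' r" "\<forall>y\<in>S. E r' y \<longrightarrow> y = r"
      using P[OF r(1,2) w0] by blast
    have "r' = s" using r(4) r'(1) symE[OF r'(2)] by blast
    then have sr: "\<forall>y\<in>S. E s y \<longrightarrow> y = r" using r'(3) by blast
    have "s \<in> V" "r \<in> V" using s(1) r(1) inS by blast+
    then obtain z where z: "z \<in> V" "E r z" "z \<noteq> s" "\<not> E s z"
      using claimB[of s r] r symE by blast
    have "z \<notin> S" using z r by blast
    moreover have "z \<noteq> v" using z r S_notv by blast
    ultimately have "E v z" using part z by blast
    then obtain r'' where r'': "r'' \<in> S" "E r'' s" "\<not> E r'' z"
      using P[OF s z(1)] by blast
    have "r'' = r" using sr r'' symE by blast
    then show False using r'' z by blast
  qed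
  have aV: "a \<in> V" "c \<in> V" using CS inC inS by blast+
  have nbnv: "nbhd V E b \<inter> nbhd V E v = {}" using nb unfolding nbhd_def by blast
  have ne1: "nbhd V E a - {b} \<noteq> {}" using other_nb[OF aV(1), of b] unfolding nbhd_def by blast
  have ne2: "nbhd V E c - {b} \<noteq> {}" using other_nb[OF aV(2), of b] unfolding nbhd_def by blast
  have outS: "\<And>x w. x \<in> {a,c} \<Longrightarrow> w \<in> V \<Longrightarrow> E x w \<Longrightarrow> w \<noteq> b \<Longrightarrow> E v w"
  proof -
    fix x w assume x: "x \<in> {a,c}" "w \<in> V" "E x w" "w \<noteq> b"
    have "w \<notin> S" using Na Nc x by blast
    moreover have "w \<noteq> v" using S_notv x CS inC by blast
    ultimately show "E v w" using part x by blast
  qed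
  have disj: "(nbhd V E a - {b}) \<inter> (nbhd V E c - {b}) = {}"
  proof (rule ccontr)
    assume "\<not> ?thesis"
    then obtain w where w: "w \<in> V" "E a w" "E c w" "w \<noteq> b" unfolding nbhd_def by blast
    have Evw: "E v w" using outS w by blast
    obtain s where s: "s \<in> S" "\<forall>y\<in>S. E s y \<longrightarrow> y = b \<or> y = c" "\<not> E s w"
      using claimA[of b c w] CS inC C0 w Evw by blast
    then consider "s = a" | "s = b" | "s = c" using SC C0 by blast
    then show False
    proof cases
      case 1 then show False using s w by blast
    next
      case 2 then show False using s e CS inC C0 symE by blast
    next
      case 3 then show False using s w by blast
    qed
  qed
  have un: "nbhd V E v = (nbhd V E a - {b}) \<union> (nbhd V E c - {b})"
  proof
    show "nbhd V E v \<subseteq> (nbhd V E a - {b}) \<union> (nbhd V E c - {b})"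
    proof
      fix w assume "w \<in> nbhd V E v"
      then have w: "w \<in> V" "E v w" unfolding nbhd_def by auto
      have "w \<noteq> v" using w irr by blast
      then obtain s where s: "s \<in> S" "E w s" using F3 w by blast
      have "w \<notin> S" using w inS by blast
      then have "w \<noteq> b" using inC CS by blast
      moreover have "s \<noteq> b" using nb w s symE by blast
      ultimately show "w \<in> (nbhd V E a - {b}) \<union> (nbhd V E c - {b})"
        using s SC C0 w symE unfolding nbhd_def by blast
    qed
    show "(nbhd V E a - {b}) \<union> (nbhd V E c - {b}) \<subseteq> nbhd V E v"
      using outS unfolding nbhd_def by blast
  qed
  show ?thesis using SC nbnv ne1 ne2 disj un by blast
qed


lemma comp_exists:
  assumes s: "s \<in> S"
  shows "\<exists>C. component S E C \<and> s \<in> C"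
proof -
  define R where "R = (\<lambda>a b. a \<in> S \<and> b \<in> S \<and> E a b)"
  define C where "C = {y. R\<^sup>*\<^sup>* s y}"
  have sC: "s \<in> C" unfolding C_def by simp
  have CS: "C \<subseteq> S"
  proof
    fix y assume "y \<in> C"
    then have "R\<^sup>*\<^sup>* s y" unfolding C_def by simp
    then show "y \<in> S" using s by (induction rule: rtranclp.induct) (auto simp: R_def)
  qed
  define RC where "RC = (\<lambda>a b. a \<in> C \<and> b \<in> C \<and> E a b)"
  have toRC: "R\<^sup>*\<^sup>* s y \<Longrightarrow> RC\<^sup>*\<^sup>* s y" for y
  proof (induction rule: rtranclp_induct)
    case base then show ?case by simp
  next
    case (step b c)
    then have "b \<in> C" "c \<in> C" unfolding C_def by (auto intro: rtranclp.rtrancl_into_rtrancl)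
    moreover have "E b c" using step(2) unfolding R_def by blast
    ultimately have "RC b c" unfolding RC_def by blast
    with step(3) show ?case by (rule rtranclp.rtrancl_into_rtrancl)
  qed
  have conn: "connected_set E C"
    unfolding connected_set_def
  proof (intro ballI)
    fix x y assume "x \<in> C" "y \<in> C"
    then have "RC\<^sup>*\<^sup>* s x" "RC\<^sup>*\<^sup>* s y" using toRC unfolding C_def by auto
    moreover have "RC\<^sup>*\<^sup>* x s" using rtranclp_sym_rev[of RC s x] calculation(1) symE
      unfolding RC_def by blast
    ultimately have "RC\<^sup>*\<^sup>* x y" using rtranclp_trans[of RC x s y] by blast
    then show "(\<lambda>a b. a \<in> C \<and> b \<in> C \<and> E a b)\<^sup>*\<^sup>* x y" unfolding RC_def .
  qed
  have clos: "\<forall>x\<in>C. \<forall>y\<in>S - C. \<not> E x y"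
  proof (intro ballI notI)
    fix x y assume "x \<in> C" "y \<in> S - C" "E x y"
    then have "R x y" unfolding R_def using CS by blast
    then have "R\<^sup>*\<^sup>* s y" using \<open>x \<in> C\<close> unfolding C_def by (auto intro: rtranclp.rtrancl_into_rtrancl)
    then show False using \<open>y \<in> S - C\<close> unfolding C_def by blast
  qed
  have "component S E C" unfolding component_def using sC CS conn clos by blast
  then show ?thesis using sC by blast
qed

lemma p2nb:
  assumes c: "component S E C" and p: "iso_P2 E C" and x: "x \<in> C"
  shows "\<exists>x'. C = {x,x'} \<and> x \<noteq> x' \<and> E x x' \<and> (\<forall>y\<in>S. E x y \<longrightarrow> y = x')"
proof -
  obtain a b where ab: "C = {a,b}" "a \<noteq> b" "E a b" using p unfolding iso_P2_def by blast
  obtain x' where x': "C = {x,x'}" "x \<noteq> x'" "E x x'"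
  proof (cases "x = a")
    case True then show ?thesis using that ab by blast
  next
    case False then have "x = b" using ab x by blast
    then show ?thesis using that ab symE by blast
  qed
  have "\<forall>y\<in>S. E x y \<longrightarrow> y = x'"
  proof (intro ballI impI)
    fix y assume "y \<in> S" "E x y"
    then have "y \<in> C" using comp_clos c x by blast
    then show "y = x'" using x' irr \<open>E x y\<close> by blast
  qed
  then show ?thesis using x' by blast
qed

lemma part3:
  assumes all: "\<forall>C. component S E C \<longrightarrow> iso_P2 E C"
  shows "(\<forall>u\<in>S. nbhd V E u \<inter> nbhd V E v \<noteq> {}) \<and>
        (\<forall>C D x y. component S E C \<and> component S E D \<and> x \<in> C \<and> y \<in> D \<and> x \<noteq> y \<longrightarrow>
            (nbhd V E x - C) \<inter> (nbhd V E y - D) = {}) \<and>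
        nbhd V E v = (\<Union>{nbhd V E x - C | C x. component S E C \<and> x \<in> C})"
proof (intro conjI)
  show "\<forall>u\<in>S. nbhd V E u \<inter> nbhd V E v \<noteq> {}"
  proof
    fix u assume u: "u \<in> S"
    obtain C where C: "component S E C" "u \<in> C" using comp_exists u by blast
    obtain u' where u': "C = {u,u'}" "u \<noteq> u'" "E u u'" "\<forall>y\<in>S. E u y \<longrightarrow> y = u'"
      using p2nb[OF C(1) _ C(2)] all C(1) by blast
    have uV: "u \<in> V" "u' \<in> V" using u' comp_sub[OF C(1)] inS by blast+
    obtain z where z: "z \<in> V" "E u z" "z \<noteq> u'" "\<not> E u' z"
      using claimB[OF uV(2) uV(1)] u'(3) symE by blast
    have "z \<notin> S" using z u' by blast
    moreover have "z \<noteq> v" using z u S_notv by blast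
    ultimately have "E v z" using part z by blast
    then show "nbhd V E u \<inter> nbhd V E v \<noteq> {}" using z unfolding nbhd_def by blast
  qed
  show "\<forall>C D x y. component S E C \<and> component S E D \<and> x \<in> C \<and> y \<in> D \<and> x \<noteq> y \<longrightarrow>
            (nbhd V E x - C) \<inter> (nbhd V E y - D) = {}"
  proof (intro allI impI)
    fix C D x y assume h: "component S E C \<and> component S E D \<and> x \<in> C \<and> y \<in> D \<and> x \<noteq> y"
    then have cC: "component S E C" and cD: "component S E D" and xy: "x \<in> C" "y \<in> D" "x \<noteq> y"
      by auto
    obtain x' where x': "C = {x,x'}" "x \<noteq> x'" "E x x'" "\<forall>z\<in>S. E x z \<longrightarrow> z = x'"
      using p2nb[OF cC _ xy(1)] all cC by blast
    obtain y' where y': "D = {y,y'}" "y \<noteq> y'" "E y y'" "\<forall>z\<in>S. E y z \<longrightarrow> z = y'"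
      using p2nb[OF cD _ xy(2)] all cD by blast
    have CS: "C \<subseteq> S" "D \<subseteq> S" using comp_sub cC cD by auto
    show "(nbhd V E x - C) \<inter> (nbhd V E y - D) = {}"
    proof (rule ccontr)
      assume "\<not> ?thesis"
      then obtain w where w: "w \<in> V" "E x w" "E y w" "w \<notin> C" "w \<notin> D"
        unfolding nbhd_def by blast
      have "w \<notin> S" using comp_clos[OF cC xy(1) _ w(2)] w(4) by blast
      moreover have "w \<noteq> v" using S_notv w xy CS by blast
      ultimately have Evw: "E v w" using part w by blast
      have x'y': "x' \<noteq> y'"
      proof
        assume e: "x' = y'"
        then have "y \<in> C" using comp_clos2[OF cC _ _ ] x' y' CS symE by blast
        then show False using x' xy y' irr e by blast
      qed
      have x'S: "x' \<in> S" "y' \<in> S" using x' y' CS by auto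
      obtain s where s: "s \<in> S" "\<forall>z\<in>S. E s z \<longrightarrow> z = x' \<or> z = y'" "\<not> E s w"
        using claimA[OF x'S x'y' w(1) Evw] by blast
      obtain t where t: "t \<in> S" "E s t" using S_nb s by blast
      have "s \<noteq> x" "s \<noteq> y" using s w by auto
      then show False
      proof (cases "t = x'")
        case True
        then have "s \<in> C" using comp_clos2[OF cC _ s(1)] x' t by blast
        then show False using x' \<open>s \<noteq> x\<close> t True irr by blast
      next
        case False
        then have "t = y'" using s t by blast
        then have "s \<in> D" using comp_clos2[OF cD _ s(1)] y' t by blast
        then show False using y' \<open>s \<noteq> y\<close> t \<open>t = y'\<close> irr by blast
      qed
    qed
  qed
  show "nbhd V E v = (\<Union>{nbhd V E x - C | C x. component S E C \<and> x \<in> C})"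
  proof
    show "nbhd V E v \<subseteq> (\<Union>{nbhd V E x - C | C x. component S E C \<and> x \<in> C})"
    proof
      fix w assume "w \<in> nbhd V E v"
      then have w: "w \<in> V" "E v w" unfolding nbhd_def by auto
      have "w \<noteq> v" using w irr by blast
      then obtain s where s: "s \<in> S" "E w s" using F3 w by blast
      obtain C where C: "component S E C" "s \<in> C" using comp_exists s(1) by blast
      have "w \<notin> S" using w inS by blast
      then have "w \<in> nbhd V E s - C" using comp_sub[OF C(1)] w s symE unfolding nbhd_def by blast
      then show "w \<in> (\<Union>{nbhd V E x - C | C x. component S E C \<and> x \<in> C})" using C by blast
    qed
    show "(\<Union>{nbhd V E x - C | C x. component S E C \<and> x \<in> C}) \<subseteq> nbhd V E v"
    proof
      fix w assume "w \<in> (\<Union>{nbhd V E x - C | C x. component S E C \<and> x \<in> C})"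
      then obtain C x where Cx: "component S E C" "x \<in> C" "w \<in> nbhd V E x" "w \<notin> C" by blast
      have w: "w \<in> V" "E x w" using Cx(3) unfolding nbhd_def by auto
      have xS: "x \<in> S" using comp_sub Cx by blast
      have "w \<notin> S" using comp_clos[OF Cx(1) Cx(2) _ w(2)] Cx(4) by blast
      moreover have "w \<noteq> v" using S_notv xS w by blast
      ultimately have "E v w" using part w by blast
      then show "w \<in> nbhd V E v" using w unfolding nbhd_def by blast
    qed
  qed
qed

end

theorem mainTheorem4:
  fixes V :: "'a set" and E :: "'a \<Rightarrow> 'a \<Rightarrow> bool" and v :: 'a
  assumes G: "graph V E"
    and crit: "gamma_t_critical V E"
    and gt: "gamma_t V E = card V - max_deg V E"
    and mindeg: "min_deg V E \<ge> 2"
    and v: "v \<in> V" "deg V E v = max_deg V E"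
  defines "S \<equiv> V - cnbhd V E v"
  shows "(\<forall>C. component S E C \<longrightarrow> iso_P2 E C \<or> iso_P3 E C)
    \<and> ((\<exists>C. component S E C \<and> iso_P3 E C) \<longrightarrow>
        (\<exists>u1 u2 u3. S = {u1, u2, u3} \<and> u1 \<noteq> u2 \<and> u2 \<noteq> u3 \<and> u1 \<noteq> u3 \<and>
           E u1 u2 \<and> E u2 u3 \<and> \<not> E u1 u3 \<and>
           nbhd V E u2 \<inter> nbhd V E v = {} \<and>
           nbhd V E u1 - {u2} \<noteq> {} \<and> nbhd V E u3 - {u2} \<noteq> {} \<and>
           (nbhd V E u1 - {u2}) \<inter> (nbhd V E u3 - {u2}) = {} \<and>
           nbhd V E v = (nbhd V E u1 - {u2}) \<union> (nbhd V E u3 - {u2})))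
    \<and> ((\<forall>C. component S E C \<longrightarrow> iso_P2 E C) \<longrightarrow>
        (\<forall>u\<in>S. nbhd V E u \<inter> nbhd V E v \<noteq> {}) \<and>
        (\<forall>C D x y. component S E C \<and> component S E D \<and> x \<in> C \<and> y \<in> D \<and> x \<noteq> y \<longrightarrow>
            (nbhd V E x - C) \<inter> (nbhd V E y - D) = {}) \<and>
        nbhd V E v = (\<Union>{nbhd V E x - C | C x. component S E C \<and> x \<in> C}))"
proof -
  interpret TC V E v S
    using G crit gt mindeg v S_def by unfold_locales simp_all
  have p1: "\<forall>C. component S E C \<longrightarrow> iso_P2 E C \<or> iso_P3 E C" using part1 by blast
  have p2: "(\<exists>C. component S E C \<and> iso_P3 E C) \<longrightarrow>
        (\<exists>u1 u2 u3. S = {u1, u2, u3} \<and> u1 \<noteq> u2 \<and> u2 \<noteq> u3 \<and> u1 \<noteq> u3 \<and>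
           E u1 u2 \<and> E u2 u3 \<and> \<not> E u1 u3 \<and>
           nbhd V E u2 \<inter> nbhd V E v = {} \<and>
           nbhd V E u1 - {u2} \<noteq> {} \<and> nbhd V E u3 - {u2} \<noteq> {} \<and>
           (nbhd V E u1 - {u2}) \<inter> (nbhd V E u3 - {u2}) = {} \<and>
           nbhd V E v = (nbhd V E u1 - {u2}) \<union> (nbhd V E u3 - {u2}))"
  proof
    assume "\<exists>C. component S E C \<and> iso_P3 E C"
    then obtain C a b c where c: "component S E C" "C = {a,b,c}" "a \<noteq> b" "b \<noteq> c" "a \<noteq> c"
      "E a b" "E b c" "\<not> E a c" unfolding iso_P3_def by blast
    have h: "S = C \<and> nbhd V E b \<inter> nbhd V E v = {} \<and> nbhd V E a - {b} \<noteq> {} \<and> nbhd V E c - {b} \<noteq> {}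
    \<and> (nbhd V E a - {b}) \<inter> (nbhd V E c - {b}) = {}
    \<and> nbhd V E v = (nbhd V E a - {b}) \<union> (nbhd V E c - {b})" using part2[OF c] by blast
    show "\<exists>u1 u2 u3. S = {u1, u2, u3} \<and> u1 \<noteq> u2 \<and> u2 \<noteq> u3 \<and> u1 \<noteq> u3 \<and>
           E u1 u2 \<and> E u2 u3 \<and> \<not> E u1 u3 \<and>
           nbhd V E u2 \<inter> nbhd V E v = {} \<and>
           nbhd V E u1 - {u2} \<noteq> {} \<and> nbhd V E u3 - {u2} \<noteq> {} \<and>
           (nbhd V E u1 - {u2}) \<inter> (nbhd V E u3 - {u2}) = {} \<and>
           nbhd V E v = (nbhd V E u1 - {u2}) \<union> (nbhd V E u3 - {u2})"
      apply (rule exI[of _ a], rule exI[of _ b], rule exI[of _ c])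
      using h c(2-8) apply -
      apply (elim conjE)
      apply (intro conjI)
      apply (simp_all only: simp_thms)
      done
  qed
  show ?thesis using p1 p2 part3 by blast
qed

end
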